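(* Let $(X,\triangleright)$ be a topological quandle and let $(C_*(X),\partial_* )$ be its singular quandle chain groups and boundary maps as described in the context. Then for every $n$ the composition $C_n(X)\xrightarrow{\partial_n} C_{n-1}(X)\xrightarrow{\partial_{n-1}} C_{n-2}(X)$ is zero.
   Context: A quandle is a set $X$ with a binary operation $\triangleright$ such that $x\triangleright x=x$ for all $x$, each map $\beta_y(x)=x\triangleright y$ is bijective, and $(x\triangleright y)\triangleright z=(x\triangleright z)\triangleright(y\triangleright z)$. A topological quandle is a topological space $X$ with a quandle operation $\triangleright:X\times X\to X$ that is continuous and such that every $\beta_y$ is a homeomorphism. Let $\Delta^n$ be the standard $n$-simplex with vertices $e_0,\dots,e_n$ (and let $\bar e_0,\dots,\bar e_{n-1}$ be the vertices of $\Delta^{n-1}$). A singular $n$-simplex is a continuous map $\sigma:\Delta^n\to X$; we write $\sigma=\sigma_{[x_1,\dots,x_{n+1}]}$ to indicate $x_i=\sigma(e_{i-1})$. Singular $n$-simplices form a quandle under the pointwise operation $(\sigma\triangleright\tau)(t)=\sigma(t)\triangleright\tau(t)$. $C_n(X)$ is the free abelian group on all singular $n$-simplices. For $2\le i\le n+1$, let $d_i\sigma$ be $\sigma$ composed with the affine map $\Delta^{n-1}\to\Delta^n$ sending $\bar e_j\mapsto e_j$ for $j\le i-2$ and $\bar e_j\mapsto e_{j+1}$ for $j\ge i-1$ (the face omitting the $i$-th vertex $x_i$), and let $s_i\sigma=\sigma\circ\iota_i$ where $\iota_i:\Delta^{n-1}\to\Delta^n$ is the affine map $\sum_{j=0}^{n-1}t_j\bar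 e_j\mapsto(\sum_{k=0}^{i-2}t_k)e_{i-1}+\sum_{j=i-1}^{n-1}t_je_{j+1}$ (so $s_i\sigma$ has vertices $x_i,\dots,x_i$ ($i-1$ times), $x_{i+1},\dots,x_{n+1}$). The boundary $\partial_n:C_n(X)\to C_{n-1}(X)$ is defined on generators by $\partial_n\sigma=\sum_{i=2}^{n+1}(-1)^i\big(d_i\sigma-d_i\sigma\triangleright s_i\sigma\big)$ and extended linearly; $\partial_0=0$. *)

theory Defs
  imports "HOL-Homology.Homology"
begin

definition topological_quandle :: "'a topology \<Rightarrow> ('a \<Rightarrow> 'a \<Rightarrow> 'a) \<Rightarrow> bool" where
  "topological_quandle X q \<longleftrightarrow>
     (\<forall>x\<in>topspace X. \<forall>y\<in>topspace X. q x y \<in> topspace X)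
   \<and> (\<forall>x\<in>topspace X. q x x = x)
   \<and> (\<forall>y\<in>topspace X. bij_betw (\<lambda>x. q x y) (topspace X) (topspace X))
   \<and> (\<forall>x\<in>topspace X. \<forall>y\<in>topspace X. \<forall>z\<in>topspace X.
        q (q x y) z = q (q x z) (q y z))
   \<and> continuous_map (prod_topology X X) X (\<lambda>(x, y). q x y)
   \<and> (\<forall>y\<in>topspace X. homeomorphic_map X X (\<lambda>x. q x y))"

definition simplex_op :: "nat \<Rightarrow> ('a \<Rightarrow> 'a \<Rightarrow> 'a) \<Rightarrow> ((nat \<Rightarrow> real) \<Rightarrow> 'a)
    \<Rightarrow> ((nat \<Rightarrow> real) \<Rightarrow> 'a) \<Rightarrow> (nat \<Rightarrow> real) \<Rightarrow> 'a" where
  "simplex_op n q \<sigma> \<tau> = restrict (\<lambda>t. q (\<sigma> t) (\<tau> t)) (standard_simplex n)"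

text \<open>The affine map iota_i : Delta^(n-1) -> Delta^n (i >= 2), in barycentric coordinates:
  coordinates 0..i-2 become 0, coordinate i-1 is t_0+...+t_(i-2),
  coordinate j >= i is t_(j-1).\<close>
definition degen_map :: "nat \<Rightarrow> (nat \<Rightarrow> real) \<Rightarrow> (nat \<Rightarrow> real)" where
  "degen_map i t = (\<lambda>j. if j < i - 1 then 0
                         else if j = i - 1 then (\<Sum>k<i - 1. t k)
                         else t (j - 1))"

definition quandle_s :: "nat \<Rightarrow> nat \<Rightarrow> ((nat \<Rightarrow> real) \<Rightarrow> 'a) \<Rightarrow> (nat \<Rightarrow> real) \<Rightarrow> 'a" where
  "quandle_s n i \<sigma> = restrict (\<sigma> \<circ> degen_map i) (standard_simplex (n - 1))"

text \<open>d_i sigma (2 <= i <= n+1) omits the i-th vertex x_i = sigma(e_(i-1)),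
  i.e. it is the library's face singular_face n (i-1).\<close>
definition quandle_d :: "nat \<Rightarrow> nat \<Rightarrow> ((nat \<Rightarrow> real) \<Rightarrow> 'a) \<Rightarrow> (nat \<Rightarrow> real) \<Rightarrow> 'a" where
  "quandle_d n i \<sigma> = singular_face n (i - 1) \<sigma>"

definition quandle_boundary_gen :: "('a \<Rightarrow> 'a \<Rightarrow> 'a) \<Rightarrow> nat \<Rightarrow> ((nat \<Rightarrow> real) \<Rightarrow> 'a) \<Rightarrow> 'a chain" where
  "quandle_boundary_gen q n \<sigma> =
     (\<Sum>i\<in>{2..n+1}. frag_cmul ((-1) ^ i)
        (frag_of (quandle_d n i \<sigma>)
         - frag_of (simplex_op (n - 1) q (quandle_d n i \<sigma>) (quandle_s n i \<sigma>))))"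

definition quandle_boundary :: "('a \<Rightarrow> 'a \<Rightarrow> 'a) \<Rightarrow> nat \<Rightarrow> 'a chain \<Rightarrow> 'a chain" where
  "quandle_boundary q n c = (if n = 0 then 0 else frag_extend (quandle_boundary_gen q n) c)"

end

theory Submission
  imports Defs
begin


lemma sum_face: "a \<le> c \<Longrightarrow> (\<Sum>k<Suc c. simplical_face a t k) = (\<Sum>k<c. (t::nat\<Rightarrow>real) k)"
proof (induction c rule: dec_induct)
  case base then show ?case by (simp add: simplical_face_def)
next
  case (step c) then show ?case by (simp add: simplical_face_def)
qed

lemma sum_degen: "a \<le> p \<Longrightarrow> (\<Sum>j\<le>p. degen_map (Suc a) t j) = (\<Sum>k<p. (t::nat\<Rightarrow>real) k)"
proof (induction p rule: dec_induct)
  case base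
  have "(\<Sum>j\<le>a. degen_map (Suc a) t j) = (\<Sum>j<a. degen_map (Suc a) t j) + degen_map (Suc a) t a"
    by (simp add: lessThan_Suc_atMost[symmetric])
  also have "\<dots> = (\<Sum>k<a. t k)" by (simp add: degen_map_def)
  finally show ?case .
next
  case (step p) then show ?case by (simp add: degen_map_def)
qed

lemma V1: "a \<le> c \<Longrightarrow> simplical_face a (simplical_face c t) = simplical_face (Suc c) (simplical_face a t)"
  by (rule ext) (auto simp: simplical_face_def)

lemma V3: "a \<le> c \<Longrightarrow> degen_map (Suc a) (simplical_face c t) = simplical_face (Suc c) (degen_map (Suc a) (t::nat\<Rightarrow>real))"
  by (rule ext) (auto simp: simplical_face_def degen_map_def intro!: sum.cong)

lemma V4: "a \<le> c \<Longrightarrow> simplical_face a (degen_map (Suc c) t) = degen_map (Suc (Suc c)) (simplical_face a (t::nat\<Rightarrow>real))"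
proof (rule ext)
  fix m assume ac: "a \<le> c"
  have S: "(\<Sum>k<Suc c. simplical_face a t k) = (\<Sum>k<c. t k)" using sum_face[OF ac] .
  show "simplical_face a (degen_map (Suc c) t) m = degen_map (Suc (Suc c)) (simplical_face a t) m"
  proof (cases "m < a")
    case True then show ?thesis using ac by (simp add: simplical_face_def degen_map_def)
  next
    case False
    show ?thesis
    proof (cases "m = a")
      case True then show ?thesis using ac by (simp add: simplical_face_def degen_map_def)
    next
      case False2: False
      have "m > a" using False False2 by simp
      then show ?thesis using ac S
        by (cases "m < Suc c"; cases "m = Suc c") (auto simp: simplical_face_def degen_map_def)
    qed
  qed
qed

lemma V5: "1 \<le> a \<Longrightarrow> a \<le> c \<Longrightarrow> degen_map (Suc (Suc c)) (degen_map (Suc a) t) = degen_map (Suc (Suc c)) (simplical_face a (t::nat\<Rightarrow>real))"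
proof (rule ext)
  fix m assume a1: "1 \<le> a" and ac: "a \<le> c"
  have S1: "(\<Sum>k<Suc c. simplical_face a t k) = (\<Sum>k<c. t k)" using sum_face[OF ac] .
  have S2: "(\<Sum>k<Suc c. degen_map (Suc a) t k) = (\<Sum>k<c. t k)" using sum_degen[OF ac, of t]
    by (simp add: lessThan_Suc_atMost)
  show "degen_map (Suc (Suc c)) (degen_map (Suc a) t) m = degen_map (Suc (Suc c)) (simplical_face a t) m"
    using a1 ac S1 S2
    by (cases "m < Suc c"; cases "m = Suc c") (auto simp: simplical_face_def degen_map_def)
qed

lemma V6: "1 \<le> a \<Longrightarrow> a \<le> c \<Longrightarrow> degen_map (Suc a) (degen_map (Suc c) t) = degen_map (Suc (Suc c)) (simplical_face a (t::nat\<Rightarrow>real))"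
proof (rule ext)
  fix m assume a1: "1 \<le> a" and ac: "a \<le> c"
  have S1: "(\<Sum>k<Suc c. simplical_face a t k) = (\<Sum>k<c. t k)" using sum_face[OF ac] .
  have Z: "(\<Sum>k<a. degen_map (Suc c) t k) = 0" using ac by (simp add: degen_map_def)
  show "degen_map (Suc a) (degen_map (Suc c) t) m = degen_map (Suc (Suc c)) (simplical_face a t) m"
    using a1 ac S1 Z
    by (cases "m < a"; cases "m = a"; cases "m < Suc c"; cases "m = Suc c") (auto simp: simplical_face_def degen_map_def)
qed



lemma degen_in:
  assumes t: "t \<in> standard_simplex p" and a: "1 \<le> a" "a \<le> Suc p"
  shows "degen_map (Suc a) t \<in> standard_simplex (Suc p)"
proof -
  have t01: "\<And>i. 0 \<le> t i \<and> t i \<le> 1" and tz: "\<And>i. i > p \<Longrightarrow> t i = 0" and ts: "(\<Sum>i\<le>p. t i) = 1"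
    using t by (auto simp: standard_simplex_def)
  have "(\<Sum>k<a. t k) \<le> (\<Sum>k\<le>p. t k)"
    by (rule sum_mono2) (use a t01 in auto)
  moreover have "0 \<le> (\<Sum>k<a. t k)" by (rule sum_nonneg) (use t01 in auto)
  ultimately have A: "0 \<le> degen_map (Suc a) t i \<and> degen_map (Suc a) t i \<le> 1" for i
    using t01 ts by (auto simp: degen_map_def)
  have B: "degen_map (Suc a) t i = 0" if "i > Suc p" for i
    using that a tz by (auto simp: degen_map_def)
  have "(\<Sum>j\<le>Suc p. degen_map (Suc a) t j) = (\<Sum>k<Suc p. t k)"
    by (rule sum_degen) (use a in auto)
  also have "\<dots> = 1" using ts by (simp add: lessThan_Suc_atMost)
  finally show ?thesis using A B by (auto simp: standard_simplex_def)
qed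

lemma face_in: "t \<in> standard_simplex p \<Longrightarrow> k \<le> Suc p \<Longrightarrow> simplical_face k t \<in> standard_simplex (Suc p)"
  using simplical_face_in_standard_simplex[of "Suc p" k t] by simp

lemma qd_in: "t \<in> standard_simplex p \<Longrightarrow> quandle_d (Suc p) (Suc k) f t = f (simplical_face k t)"
  by (simp add: quandle_d_def singular_face_def)
lemma qd_out: "t \<notin> standard_simplex p \<Longrightarrow> quandle_d (Suc p) k f t = undefined"
  by (simp add: quandle_d_def singular_face_def)
lemma qs_in: "t \<in> standard_simplex p \<Longrightarrow> quandle_s (Suc p) k f t = f (degen_map k t)"
  by (simp add: quandle_s_def)
lemma qs_out: "t \<notin> standard_simplex p \<Longrightarrow> quandle_s (Suc p) k f t = undefined"
  by (simp add: quandle_s_def)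
lemma op_in: "t \<in> standard_simplex p \<Longrightarrow> simplex_op p q f g t = q (f t) (g t)"
  by (simp add: simplex_op_def)
lemma op_out: "t \<notin> standard_simplex p \<Longrightarrow> simplex_op p q f g t = undefined"
  by (simp add: simplex_op_def)


lemma pair_cancel:
  fixes G :: "nat \<Rightarrow> nat \<Rightarrow> 'b::ab_group_add"
  assumes H: "\<And>i j. 2 \<le> j \<Longrightarrow> j < i \<Longrightarrow> i \<le> Suc n \<Longrightarrow> G j (i - 1) = - G i j"
  shows "(\<Sum>i\<in>{2..Suc n}. \<Sum>j\<in>{2..n}. G i j) = 0"
proof -
  define R1 where "R1 = {p. 2 \<le> snd p \<and> snd p < fst p \<and> fst p \<le> Suc n}"
  define R2 where "R2 = {p. 2 \<le> fst p \<and> fst p \<le> snd p \<and> snd p \<le> n}"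
  have R: "{2..Suc n} \<times> {2..n} = R1 \<union> R2" unfolding R1_def R2_def by (auto simp: mem_Times_iff)
  have f1: "finite R1" by (rule finite_subset[of _ "{..Suc n} \<times> {..Suc n}"]) (auto simp: R1_def)
  have f2: "finite R2" by (rule finite_subset[of _ "{..Suc n} \<times> {..Suc n}"]) (auto simp: R2_def)
  have d: "R1 \<inter> R2 = {}" by (auto simp: R1_def R2_def)
  have "(\<Sum>i\<in>{2..Suc n}. \<Sum>j\<in>{2..n}. G i j) = (\<Sum>p\<in>{2..Suc n} \<times> {2..n}. G (fst p) (snd p))"
    by (simp add: sum.cartesian_product case_prod_beta)
  also have "\<dots> = (\<Sum>p\<in>R1. G (fst p) (snd p)) + (\<Sum>p\<in>R2. G (fst p) (snd p))"
    unfolding R by (rule sum.union_disjoint[OF f1 f2 d])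
  also have "(\<Sum>p\<in>R2. G (fst p) (snd p)) = (\<Sum>p\<in>R1. G (snd p) (fst p - 1))"
    by (rule sum.reindex_bij_witness[where i="\<lambda>p. (snd p, fst p - 1)" and j="\<lambda>p. (snd p + 1, fst p)"])
      (auto simp: R1_def R2_def)
  also have "\<dots> = (\<Sum>p\<in>R1. - G (fst p) (snd p))"
  proof (rule sum.cong)
    fix p assume "p \<in> R1" then show "G (snd p) (fst p - 1) = - G (fst p) (snd p)"
      by (intro H) (auto simp: R1_def)
  qed simp
  finally show ?thesis by (simp add: sum_negf)
qed


lemma frag_extend_extend:
  "frag_extend f (frag_extend g c) = frag_extend (\<lambda>x. frag_extend f (g x)) c"
  using subset_UNIV
  by (induction c rule: frag_induction) (auto simp: frag_extend_diff)

lemma cmul_diff: "frag_cmul k (a - b) = frag_cmul k a - frag_cmul k b"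
  by (metis diff_add_cancel frag_cmul_distrib2 add_diff_cancel_right')

lemma cmul_neg: "frag_cmul (-k) x = - frag_cmul k x"
  by (metis frag_cmul_cmul frag_cmul_minus_one mult_minus1)

lemma cmul_comb: "frag_cmul k (x - y) - frag_cmul k (z - w) = frag_cmul k (x - y - z + w)"
proof -
  have "x - y - z + w = (x - y) - (z - w)" by (simp add: algebra_simps)
  then show ?thesis by (simp only: cmul_diff)
qed

lemma bb_zero:
  assumes Q: "topological_quandle X q"
    and sig: "\<And>u. u \<in> standard_simplex (Suc (Suc m)) \<Longrightarrow> \<sigma> u \<in> topspace X"
  shows "frag_extend (quandle_boundary_gen q (Suc m)) (quandle_boundary_gen q (Suc (Suc m)) \<sigma>) = 0"
proof -
  have idem: "\<And>x. x \<in> topspace X \<Longrightarrow> q x x = x"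
    and dist: "\<And>x y z. x \<in> topspace X \<Longrightarrow> y \<in> topspace X \<Longrightarrow> z \<in> topspace X \<Longrightarrow> q (q x z) (q y z) = q (q x y) z"
    using Q unfolding topological_quandle_def by metis+
  define d where "d i = quandle_d (Suc (Suc m)) i \<sigma>" for i
  define s where "s i = quandle_s (Suc (Suc m)) i \<sigma>" for i
  define \<rho> where "\<rho> i = simplex_op (Suc m) q (d i) (s i)" for i
  define A where "A i j = quandle_d (Suc m) j (d i)" for i j
  define B where "B i j = simplex_op m q (A i j) (quandle_s (Suc m) j (d i))" for i j
  define C where "C i j = quandle_d (Suc m) j (\<rho> i)" for i j
  define D where "D i j = simplex_op m q (C i j) (quandle_s (Suc m) j (\<rho> i))" for i j
  define G where "G i j = frag_cmul ((-1)^(i+j)) (frag_of (A i j) - frag_of (B i j) - frag_of (C i j) + frag_of (D i j))" for i j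
  have step1: "frag_extend (quandle_boundary_gen q (Suc m)) (quandle_boundary_gen q (Suc (Suc m)) \<sigma>)
     = (\<Sum>i\<in>{2..Suc (Suc m) + 1}. \<Sum>j\<in>{2..Suc m + 1}. G i j)"
  proof -
    have "frag_extend (quandle_boundary_gen q (Suc m)) (quandle_boundary_gen q (Suc (Suc m)) \<sigma>)
       = (\<Sum>i\<in>{2..Suc (Suc m) + 1}. frag_cmul ((-1)^i) (quandle_boundary_gen q (Suc m) (d i) - quandle_boundary_gen q (Suc m) (\<rho> i)))"
      unfolding quandle_boundary_gen_def[of q "Suc (Suc m)"] d_def s_def \<rho>_def
      by (simp only: frag_extend_sum[OF finite_atLeastAtMost] o_def frag_extend_cmul frag_extend_diff frag_extend_of diff_Suc_1)
    also have "\<dots> = (\<Sum>i\<in>{2..Suc (Suc m) + 1}. \<Sum>j\<in>{2..Suc m + 1}. G i j)"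
    proof (rule sum.cong)
      fix i
      have "quandle_boundary_gen q (Suc m) (d i) - quandle_boundary_gen q (Suc m) (\<rho> i)
          = (\<Sum>j\<in>{2..Suc m + 1}. frag_cmul ((-1)^j) (frag_of (A i j) - frag_of (B i j)) - frag_cmul ((-1)^j) (frag_of (C i j) - frag_of (D i j)))"
        unfolding quandle_boundary_gen_def A_def B_def C_def D_def
        by (simp only: sum_subtractf diff_Suc_1)
      also have "\<dots> = (\<Sum>j\<in>{2..Suc m + 1}. frag_cmul ((-1)^j) (frag_of (A i j) - frag_of (B i j) - frag_of (C i j) + frag_of (D i j)))"
        by (rule sum.cong) (rule refl, rule cmul_comb)
      finally have e: "quandle_boundary_gen q (Suc m) (d i) - quandle_boundary_gen q (Suc m) (\<rho> i) = \<dots>" .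
      show "frag_cmul ((-1)^i) (quandle_boundary_gen q (Suc m) (d i) - quandle_boundary_gen q (Suc m) (\<rho> i)) = (\<Sum>j\<in>{2..Suc m + 1}. G i j)"
        unfolding e frag_cmul_sum G_def by (simp only: frag_cmul_cmul power_add)
    qed (rule refl)
    finally show ?thesis .
  qed
  have ids: "A (Suc a) (Suc c) = A (Suc (Suc c)) (Suc a) \<and> B (Suc a) (Suc c) = C (Suc (Suc c)) (Suc a)
     \<and> C (Suc a) (Suc c) = B (Suc (Suc c)) (Suc a) \<and> D (Suc a) (Suc c) = D (Suc (Suc c)) (Suc a)"
    if ac: "1 \<le> a" "a \<le> c" "c \<le> Suc m" for a c
  proof -
    have *: "f1 = f2" if "\<And>t. t \<in> standard_simplex m \<Longrightarrow> f1 t = f2 t" "\<And>t. t \<notin> standard_simplex m \<Longrightarrow> f1 t = f2 t" for f1 f2 :: "(nat \<Rightarrow> real) \<Rightarrow> 'a"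
      using that by blast
    have mem: "\<And>u. u \<in> standard_simplex (Suc (Suc m)) \<Longrightarrow> \<sigma> u \<in> topspace X" by (rule sig)
    show ?thesis
      using ac
      apply (intro conjI *)
      apply (simp_all add: A_def B_def C_def D_def \<rho>_def d_def s_def qd_out qs_out op_out)
      apply (simp_all add: qd_in qs_in op_in face_in degen_in)
      apply (simp_all add: V1 V3 V4 V5 V6)
      apply (simp add: idem dist mem face_in degen_in)
      done
  qed
  have I: "{2..Suc (Suc m) + 1} = {2..Suc (Suc (Suc m))}" "{2..Suc m + 1} = {2..Suc (Suc m)}" by simp_all
  show ?thesis
    unfolding step1 I
  proof (rule pair_cancel)
    fix i j :: nat assume h: "2 \<le> j" "j < i" "i \<le> Suc (Suc (Suc m))"
    define a where "a = j - 1"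
    define c where "c = i - 2"
    have ij: "j = Suc a" "i = Suc (Suc c)" "1 \<le> a" "a \<le> c" "c \<le> Suc m"
      using h unfolding a_def c_def by auto
    have p: "((-1::int)^(Suc (Suc c) + Suc a)) = - ((-1)^(Suc a + Suc c))" by (simp add: add.commute)
    have "G (Suc a) (Suc c) = - G (Suc (Suc c)) (Suc a)"
      unfolding G_def using ids[OF ij(3-5)] p by (simp only: cmul_neg diff_right_commute minus_minus)
    then show "G j (i - 1) = - G i j" unfolding ij by simp
  qed
qed

theorem mainTheorem1:
  fixes X :: "'a topology" and q :: "'a \<Rightarrow> 'a \<Rightarrow> 'a" and n :: nat and c :: "'a chain"
  assumes "topological_quandle X q"
    and "singular_chain n X c"
  shows "quandle_boundary q (n - 1) (quandle_boundary q n c) = 0"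
proof (cases n)
  case 0 then show ?thesis by (simp add: quandle_boundary_def)
next
  case (Suc n1)
  show ?thesis
  proof (cases n1)
    case 0 with Suc show ?thesis by (simp add: quandle_boundary_def)
  next
    case (Suc m)
    with \<open>n = Suc n1\<close> have n: "n = Suc (Suc m)" by simp
    have "quandle_boundary q (n - 1) (quandle_boundary q n c)
        = frag_extend (quandle_boundary_gen q (Suc m)) (frag_extend (quandle_boundary_gen q (Suc (Suc m))) c)"
      by (simp add: quandle_boundary_def n)
    also have "\<dots> = frag_extend (\<lambda>x. frag_extend (quandle_boundary_gen q (Suc m)) (quandle_boundary_gen q (Suc (Suc m)) x)) c"
      by (rule frag_extend_extend)
    also have "\<dots> = 0"
    proof (rule frag_extend_eq_0)
      fix x assume "x \<in> Poly_Mapping.keys c"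
      then have "singular_simplex (Suc (Suc m)) X x" using assms(2) n by (auto simp: singular_chain_def)
      then have im: "\<And>u. u \<in> standard_simplex (Suc (Suc m)) \<Longrightarrow> x u \<in> topspace X"
        by (auto simp: singular_simplex_def continuous_map_def)
      show "frag_extend (quandle_boundary_gen q (Suc m)) (quandle_boundary_gen q (Suc (Suc m)) x) = 0"
        by (rule bb_zero[OF assms(1) im])
    qed
    finally show ?thesis .
  qed
qed

end
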